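(* Let $\alpha>0$. The space $BV_\alpha(\mathbb{R}^d)$ embeds compactly into $L^1(\mathbb{R}^d)$: every sequence $(g_n)$ with $\sup_n\|g_n\|_{BV_\alpha}<\infty$ has a subsequence converging in $L^1(\mathbb{R}^d)$.
   Context: Let $\rho_\alpha(x)=(1+|x|^2)^{\alpha/2}$ and $L^1_\alpha(\mathbb{R}^d)$ the space of measurable $f$ with $\|f\|_{L^1_\alpha}:=\int\rho_\alpha|f|\,dx<\infty$. Let $\psi$ be a Radon probability measure on $\mathbb{R}^d$ absolutely continuous with respect to Lebesgue measure, with a continuous bounded density $\psi'$ satisfying $\psi'>0$ everywhere. For Borel $S$, $\operatorname{osc}(f,S):=\operatorname{ess\,sup}_S f-\operatorname{ess\,inf}_S f$ (essential with respect to Lebesgue measure). Define $\|f\|_{BV_\alpha}:=\|f\|_{L^1_\alpha}+\sup_{\epsilon\in(0,1]}\epsilon^{-1}\int_{\mathbb{R}^d}\operatorname{osc}(f,B_\epsilon(x))\,d\psi(x)$, and $BV_\alpha(\mathbb{R}^d)$ is the space of $f\in L^1_\alpha$ with finite $BV_\alpha$ norm. *)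

theory Defs
  imports "HOL-Probability.Probability"
begin

definition rho :: "real \<Rightarrow> 'a::euclidean_space \<Rightarrow> real" where
  "rho \<alpha> x = (1 + (norm x)\<^sup>2) powr (\<alpha> / 2)"

definition L1w_norm :: "real \<Rightarrow> ('a::euclidean_space \<Rightarrow> real) \<Rightarrow> ennreal" where
  "L1w_norm \<alpha> f = (\<integral>\<^sup>+ x. ennreal (rho \<alpha> x * \<bar>f x\<bar>) \<partial>lebesgue)"

definition ess_sup_on :: "'a::euclidean_space set \<Rightarrow> ('a \<Rightarrow> real) \<Rightarrow> ereal" where
  "ess_sup_on S f = Inf {c::ereal. AE x in lebesgue. x \<in> S \<longrightarrow> ereal (f x) \<le> c}"

definition ess_inf_on :: "'a::euclidean_space set \<Rightarrow> ('a \<Rightarrow> real) \<Rightarrow> ereal" where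
  "ess_inf_on S f = Sup {c::ereal. AE x in lebesgue. x \<in> S \<longrightarrow> c \<le> ereal (f x)}"

definition osc :: "('a::euclidean_space \<Rightarrow> real) \<Rightarrow> 'a set \<Rightarrow> ereal" where
  "osc f S = ess_sup_on S f - ess_inf_on S f"

definition BVw_norm :: "'a::euclidean_space measure \<Rightarrow> real \<Rightarrow> ('a \<Rightarrow> real) \<Rightarrow> ennreal" where
  "BVw_norm \<psi> \<alpha> f = L1w_norm \<alpha> f +
     (SUP \<epsilon>\<in>{0<..1::real}. (\<integral>\<^sup>+ x. e2ennreal (osc f (ball x \<epsilon>)) \<partial>\<psi>) / ennreal \<epsilon>)"

end

theory Submission
  imports Defs
begin

lemma diag_conv:
  fixes c :: "nat \<Rightarrow> nat \<Rightarrow> real"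
  assumes bdd: "\<And>i n. \<bar>c i n\<bar> \<le> B i"
  shows "\<exists>s. strict_mono s \<and> (\<forall>i. convergent (\<lambda>n. c i (s n)))"
proof -
  let ?P = "\<lambda>i. \<lambda>s. convergent (\<lambda>k. c i (s k))"
  interpret nat: subseqs ?P
  proof (unfold convergent_def, unfold subseqs_def, auto)
    fix n :: nat and s :: "nat \<Rightarrow> nat" assume s: "strict_mono s"
    have "bounded {-B n..B n}"
      using bounded_closed_interval by auto
    moreover have "\<And>k. c n (s k) \<in> {-B n..B n}"
      using bdd by (simp add: abs_le_iff minus_le_iff)
    ultimately have "\<exists>l s'. strict_mono s' \<and> ((\<lambda>k. c n (s k)) \<circ> s') \<longlonglongrightarrow> l"
      using compact_Icc compact_imp_seq_compact seq_compactE by metis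
    thus "\<exists>s'. strict_mono (s'::nat\<Rightarrow>nat) \<and> (\<exists>l. (\<lambda>k. c n (s (s' k))) \<longlonglongrightarrow> l)"
      by (auto simp: comp_def)
  qed
  define d where "d = nat.diagseq"
  have subseq: "strict_mono d"
    unfolding d_def using nat.subseq_diagseq by auto
  have rat_cnv: "?P n d" for n
  proof -
    have Pn_seqseq: "?P n (nat.seqseq (Suc n))"
      by (rule nat.seqseq_holds)
    have 1: "(\<lambda>k. c n ((nat.seqseq (Suc n) \<circ> (\<lambda>k. nat.fold_reduce (Suc n) k
      (Suc n + k))) k)) = (\<lambda>k. c n (nat.seqseq (Suc n) k)) \<circ>
      (\<lambda>k. nat.fold_reduce (Suc n) k (Suc n + k))"
      by auto
    have 2: "?P n (d \<circ> ((+) (Suc n)))"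
      unfolding d_def nat.diagseq_seqseq 1
      by (intro convergent_subseq_convergent Pn_seqseq nat.subseq_diagonal_rest)
    then obtain L where 3: "(\<lambda>na. c n (d (na + Suc n))) \<longlonglongrightarrow> L"
      by (auto simp: add.commute dest: convergentD)
    then have "(\<lambda>k. c n (d k)) \<longlonglongrightarrow> L"
      by (rule LIMSEQ_offset)
    then show ?thesis
      by (auto simp: convergent_def)
  qed
  show ?thesis using subseq rat_cnv by blast
qed

lemma AE_le_ess_sup:
  "AE x in lebesgue. x \<in> S \<longrightarrow> ereal (f x) \<le> ess_sup_on S f"
proof -
  let ?X = "{c::ereal. AE x in lebesgue. x \<in> S \<longrightarrow> ereal (f x) \<le> c}"
  have "\<infinity> \<in> ?X" by simp
  then have ne: "?X \<noteq> {}" by blast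
  obtain u where u: "\<And>n. u n \<in> ?X" "u \<longlonglongrightarrow> Inf ?X"
    using Inf_as_limit[OF ne] by blast
  have "AE x in lebesgue. \<forall>n. x \<in> S \<longrightarrow> ereal (f x) \<le> u n"
    unfolding AE_all_countable using u(1) by auto
  then show ?thesis
  proof eventually_elim
    case (elim x)
    show ?case
    proof
      assume "x \<in> S"
      then have "\<And>n. ereal (f x) \<le> u n" using elim by auto
      then show "ereal (f x) \<le> ess_sup_on S f"
        unfolding ess_sup_on_def using u(2) by (metis LIMSEQ_le_const)
    qed
  qed
qed

lemma AE_ge_ess_inf:
  "AE x in lebesgue. x \<in> S \<longrightarrow> ess_inf_on S f \<le> ereal (f x)"
proof -
  let ?X = "{c::ereal. AE x in lebesgue. x \<in> S \<longrightarrow> c \<le> ereal (f x)}"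
  have "-\<infinity> \<in> ?X" by simp
  then have "?X \<noteq> {}" by blast
  then have ne: "uminus ` ?X \<noteq> {}" by blast
  obtain v where v: "\<And>n. v n \<in> uminus ` ?X" "v \<longlonglongrightarrow> Inf (uminus ` ?X)"
    using Inf_as_limit[OF ne] by blast
  define u where "u n = - v n" for n
  have u1: "\<And>n. u n \<in> ?X" using v(1) unfolding u_def
    by (metis (no_types, lifting) ereal_uminus_uminus imageE)
  have "u \<longlonglongrightarrow> - Inf (uminus ` ?X)" unfolding u_def using v(2) by (intro tendsto_uminus_ereal)
  then have u2: "u \<longlonglongrightarrow> Sup ?X" by (simp add: ereal_Inf_uminus_image_eq)
  note u = u1 u2
  have "AE x in lebesgue. \<forall>n. x \<in> S \<longrightarrow> u n \<le> ereal (f x)"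
    unfolding AE_all_countable using u(1) by auto
  then show ?thesis
  proof eventually_elim
    case (elim x)
    show ?case
    proof
      assume "x \<in> S"
      then have "\<And>n. u n \<le> ereal (f x)" using elim by auto
      then show "ess_inf_on S f \<le> ereal (f x)"
        unfolding ess_inf_on_def using u(2) by (metis LIMSEQ_le_const2)
    qed
  qed
qed

lemma ess_sup_mono: "S \<subseteq> T \<Longrightarrow> ess_sup_on S f \<le> ess_sup_on T f"
  unfolding ess_sup_on_def
  by (rule Inf_superset_mono) (auto elim: eventually_mono)

lemma ess_inf_mono: "S \<subseteq> T \<Longrightarrow> ess_inf_on T f \<le> ess_inf_on S f"
  unfolding ess_inf_on_def
  by (rule Sup_subset_mono) (auto elim: eventually_mono)

lemma osc_mono: "S \<subseteq> T \<Longrightarrow> osc f S \<le> osc f T"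
  unfolding osc_def by (intro ereal_minus_mono ess_sup_mono ess_inf_mono)

lemma osc_cong_AE:
  assumes "AE x in lebesgue. f x = g x"
  shows "osc f S = osc g S"
proof -
  have 1: "(AE x in lebesgue. x \<in> S \<longrightarrow> P (f x)) \<longleftrightarrow> (AE x in lebesgue. x \<in> S \<longrightarrow> P (g x))" for P
    using assms by (auto elim: eventually_rev_mp)
  have a: "{c. AE x in lebesgue. x \<in> S \<longrightarrow> ereal (f x) \<le> c} = {c. AE x in lebesgue. x \<in> S \<longrightarrow> ereal (g x) \<le> c}"
    using 1[of "\<lambda>y. ereal y \<le> _"] by blast
  have b: "{c. AE x in lebesgue. x \<in> S \<longrightarrow> c \<le> ereal (f x)} = {c. AE x in lebesgue. x \<in> S \<longrightarrow> c \<le> ereal (g x)}"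
    using 1[of "\<lambda>y. _ \<le> ereal y"] by blast
  show ?thesis unfolding osc_def ess_sup_on_def ess_inf_on_def a b ..
qed

definition cval :: "'a::euclidean_space set \<Rightarrow> ('a \<Rightarrow> real) \<Rightarrow> real" where
  "cval S f = (if \<bar>ess_sup_on S f\<bar> \<noteq> \<infinity> \<and> \<bar>ess_inf_on S f\<bar> \<noteq> \<infinity> then real_of_ereal (ess_inf_on S f) else 0)"


lemma AE_cval:
  "AE x in lebesgue. x \<in> S \<longrightarrow> ereal \<bar>f x - cval S f\<bar> \<le> osc f S"
proof (cases "AE x in lebesgue. x \<notin> S")
  case True
  then show ?thesis by (rule eventually_mono) simp
next
  case False
  have sup_ne: "ess_sup_on S f \<noteq> -\<infinity>"
  proof
    assume "ess_sup_on S f = -\<infinity>"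
    then have "AE x in lebesgue. x \<notin> S" using AE_le_ess_sup[of S f] by (rule_tac eventually_mono) auto
    then show False using False by simp
  qed
  have inf_ne: "ess_inf_on S f \<noteq> \<infinity>"
  proof
    assume "ess_inf_on S f = \<infinity>"
    then have "AE x in lebesgue. x \<notin> S" using AE_ge_ess_inf[of S f] by (rule_tac eventually_mono) auto
    then show False using False by simp
  qed
  show ?thesis
  proof (cases "\<bar>ess_sup_on S f\<bar> \<noteq> \<infinity> \<and> \<bar>ess_inf_on S f\<bar> \<noteq> \<infinity>")
    case True
    define a where "a = real_of_ereal (ess_sup_on S f)"
    define b where "b = real_of_ereal (ess_inf_on S f)"
    have ab: "ess_sup_on S f = ereal a" "ess_inf_on S f = ereal b"
      using True unfolding a_def b_def by (auto simp: ereal_real')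
    have c: "cval S f = b" using True unfolding cval_def b_def by simp
    have o: "osc f S = ereal (a - b)" using ab by (simp add: osc_def)
    show ?thesis using AE_le_ess_sup[of S f] AE_ge_ess_inf[of S f]
    proof eventually_elim
      case (elim x)
      show ?case
      proof
        assume "x \<in> S"
        then have "f x \<le> a" "b \<le> f x" using elim ab by auto
        then show "ereal \<bar>f x - cval S f\<bar> \<le> osc f S" unfolding c o by simp
      qed
    qed
  next
    case False
    have "osc f S = \<infinity>"
    proof (cases "\<bar>ess_sup_on S f\<bar> = \<infinity>")
      case True
      then have "ess_sup_on S f = \<infinity>" using sup_ne by (metis ereal_infinity_cases)
      then show ?thesis using inf_ne unfolding osc_def by simp
    next
      case F2: False
      then have "\<bar>ess_inf_on S f\<bar> = \<infinity>" using False by simp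
      then have "ess_inf_on S f = -\<infinity>" using inf_ne by (metis ereal_infinity_cases)
      then show ?thesis using F2 unfolding osc_def by (cases "ess_sup_on S f") auto
    qed
    then show ?thesis by simp
  qed
qed


definition qf :: "real \<Rightarrow> 'a::euclidean_space \<Rightarrow> 'a" where
  "qf \<delta> x = (\<Sum>b\<in>Basis. of_int \<lfloor>(x \<bullet> b) / \<delta>\<rfloor> *\<^sub>R b)"

definition Lat :: "'a::euclidean_space set" where
  "Lat = {p. \<forall>b\<in>Basis. p \<bullet> b \<in> \<int>}"

lemma qf_inner: "b \<in> Basis \<Longrightarrow> qf \<delta> x \<bullet> b = of_int \<lfloor>(x \<bullet> b) / \<delta>\<rfloor>"
  unfolding qf_def by (simp add: inner_sum_left inner_Basis if_distrib sum.delta cong: if_cong)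

lemma qf_Lat: "qf \<delta> x \<in> Lat"
  unfolding Lat_def by (simp add: qf_inner)

lemma countable_Lat: "countable (Lat :: 'a::euclidean_space set)"
proof -
  let ?F = "\<lambda>z::'a \<Rightarrow> int. (\<Sum>b\<in>Basis. of_int (z b) *\<^sub>R b) :: 'a"
  have "Lat \<subseteq> ?F ` (Pi\<^sub>E Basis (\<lambda>_. UNIV))"
  proof
    fix p :: 'a assume p: "p \<in> Lat"
    define z where "z = restrict (\<lambda>b. \<lfloor>p \<bullet> b\<rfloor>) Basis"
    have "z \<in> Pi\<^sub>E Basis (\<lambda>_. UNIV)" unfolding z_def by simp
    moreover have "?F z = p"
    proof -
      have "?F z = (\<Sum>b\<in>Basis. (p \<bullet> b) *\<^sub>R b)"
        using p unfolding Lat_def z_def by (intro sum.cong) (auto elim!: Ints_cases)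
      then show ?thesis by (simp add: euclidean_representation)
    qed
    ultimately show "p \<in> ?F ` (Pi\<^sub>E Basis (\<lambda>_. UNIV))" by blast
  qed
  moreover have "countable (?F ` (Pi\<^sub>E Basis (\<lambda>_. UNIV)))"
    by (intro countable_image countable_PiE) auto
  ultimately show ?thesis by (rule countable_subset)
qed

lemma qf_measurable[measurable]: "qf \<delta> \<in> borel_measurable borel"
  unfolding qf_def by measurable

lemma qf_eq_iff: "qf \<delta> x = qf \<delta> y \<longleftrightarrow> (\<forall>b\<in>Basis. \<lfloor>(x \<bullet> b) / \<delta>\<rfloor> = \<lfloor>(y \<bullet> b) / \<delta>\<rfloor>)"
  by (simp add: euclidean_eq_iff[of "qf \<delta> x"] qf_inner)

lemma qf_dist:
  fixes x y :: "'a::euclidean_space" and \<delta> :: real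
  assumes "\<delta> > 0" "qf \<delta> x = qf \<delta> y"
  shows "dist x y < DIM('a) * \<delta>"
proof -
  have c: "\<bar>(x - y) \<bullet> b\<bar> < \<delta>" if b: "b \<in> Basis" for b :: 'a
  proof -
    have e: "\<lfloor>(x \<bullet> b) / \<delta>\<rfloor> = \<lfloor>(y \<bullet> b) / \<delta>\<rfloor>" using assms(2) b by (simp add: qf_eq_iff)
    have "\<bar>(x \<bullet> b) / \<delta> - (y \<bullet> b) / \<delta>\<bar> < 1"
      using e by linarith
    then have "\<bar>(x \<bullet> b - y \<bullet> b) / \<delta>\<bar> < 1" by (simp add: diff_divide_distrib)
    then show ?thesis using assms(1) by (simp add: inner_diff_left abs_divide)
  qed
  have "dist x y = norm (x - y)" by (simp add: dist_norm)
  also have "\<dots> \<le> (\<Sum>b\<in>Basis. \<bar>(x - y) \<bullet> b\<bar>)" by (rule norm_le_l1)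
  also have "\<dots> < (\<Sum>b\<in>(Basis::'a set). (\<delta>::real))"
    using c by (intro sum_strict_mono) auto
  also have "\<dots> = DIM('a) * \<delta>" by simp
  finally show ?thesis .
qed

lemma box_sub_cell:
  assumes "\<delta> > 0" "p \<in> Lat"
  shows "box (\<delta> *\<^sub>R p) (\<delta> *\<^sub>R p + \<delta> *\<^sub>R One) \<subseteq> {y. qf \<delta> y = p}"
proof
  fix y assume y: "y \<in> box (\<delta> *\<^sub>R p) (\<delta> *\<^sub>R p + \<delta> *\<^sub>R One)"
  have "qf \<delta> y \<bullet> b = p \<bullet> b" if b: "b \<in> Basis" for b :: 'a
  proof -
    obtain z where z: "p \<bullet> b = of_int z" using assms(2) b unfolding Lat_def by (auto elim!: Ints_cases)
    have "\<delta> * (p \<bullet> b) < y \<bullet> b" "y \<bullet> b < \<delta> * (p \<bullet> b) + \<delta>"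
      using y b by (auto simp: mem_box inner_add_left)
    then have "of_int z < (y \<bullet> b) / \<delta>" "(y \<bullet> b) / \<delta> < of_int z + 1"
      using assms(1) z by (auto simp: field_simps)
    then have "\<lfloor>(y \<bullet> b) / \<delta>\<rfloor> = z" by linarith
    then show ?thesis using b z by (simp add: qf_inner)
  qed
  then show "y \<in> {y. qf \<delta> y = p}" by (simp add: euclidean_eq_iff[of "qf \<delta> y"])
qed

lemma emeasure_cell_box:
  assumes "\<delta> > 0"
  shows "emeasure lborel (box (\<delta> *\<^sub>R p) (\<delta> *\<^sub>R p + \<delta> *\<^sub>R (One::'a::euclidean_space))) = ennreal (\<delta> ^ DIM('a))"
  using assms by (simp add: emeasure_lborel_box_eq inner_add_left prod_constant)

lemma cell_sets[measurable]: "{y. qf \<delta> y = p} \<in> sets borel"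
proof -
  have "{y. qf \<delta> y = p} = qf \<delta> -` {p} \<inter> space borel" by auto
  also have "\<dots> \<in> sets borel" by (rule measurable_sets[OF qf_measurable]) simp
  finally show ?thesis .
qed

lemma qf_count_space: "qf \<delta> \<in> measurable borel (count_space Lat)"
  by (subst measurable_count_space_eq_countable[OF countable_Lat])
     (auto simp: qf_Lat cell_sets[unfolded Collect_conv_if] vimage_def)

lemma A_measurable:
  "(\<lambda>x. F (qf \<delta> x)) \<in> borel_measurable borel"
  by (rule measurable_compose_countable'[where I=Lat and g="qf \<delta>" and f="\<lambda>i x. F i", OF _ qf_count_space countable_Lat]) simp


lemma ennreal_mult_le_div:
  assumes "0 < m" "ennreal m * X \<le> ennreal c"
  shows "X \<le> ennreal (c / m)"
proof -
  have "X = ennreal (1/m) * (ennreal m * X)"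
    using assms(1) by (simp add: ennreal_mult[symmetric] mult.assoc[symmetric])
  also have "\<dots> \<le> ennreal (1/m) * ennreal c" by (intro mult_left_mono assms(2)) simp
  also have "\<dots> = ennreal (c / m)"
  proof (cases "c \<ge> 0")
    case True
    then show ?thesis using assms(1) by (simp add: ennreal_mult[symmetric])
  next
    case False
    then have "c / m \<le> 0" "c \<le> 0" using assms(1) by (auto simp: divide_nonpos_pos)
    then show ?thesis by (simp add: ennreal_neg)
  qed
  finally show ?thesis .
qed

lemma E1:
  fixes g :: "'a::euclidean_space \<Rightarrow> real" and \<delta> \<epsilon> :: real
  assumes "0 < \<delta>" "DIM('a) * \<delta> \<le> \<epsilon>"
  shows "AE x in lborel. ennreal \<bar>g x - cval {y. qf \<delta> y = qf \<delta> x} g\<bar> \<le> e2ennreal (osc g (ball x \<epsilon>))"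
proof -
  have "AE x in lebesgue. \<forall>p\<in>Lat. x \<in> {y. qf \<delta> y = p} \<longrightarrow> ereal \<bar>g x - cval {y. qf \<delta> y = p} g\<bar> \<le> osc g {y. qf \<delta> y = p}"
    by (rule AE_ball_countable'[OF AE_cval countable_Lat])
  then have "AE x in lebesgue. ereal \<bar>g x - cval {y. qf \<delta> y = qf \<delta> x} g\<bar> \<le> osc g (ball x \<epsilon>)"
  proof (rule eventually_mono)
    fix x assume H: "\<forall>p\<in>Lat. x \<in> {y. qf \<delta> y = p} \<longrightarrow> ereal \<bar>g x - cval {y. qf \<delta> y = p} g\<bar> \<le> osc g {y. qf \<delta> y = p}"
    have sub: "{y. qf \<delta> y = qf \<delta> x} \<subseteq> ball x \<epsilon>"
    proof
      fix y assume "y \<in> {y. qf \<delta> y = qf \<delta> x}"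
      then have "dist x y < DIM('a) * \<delta>" using qf_dist[OF assms(1), of x y] by simp
      then show "y \<in> ball x \<epsilon>" using assms(2) by simp
    qed
    have "ereal \<bar>g x - cval {y. qf \<delta> y = qf \<delta> x} g\<bar> \<le> osc g {y. qf \<delta> y = qf \<delta> x}"
      using H qf_Lat by blast
    also have "\<dots> \<le> osc g (ball x \<epsilon>)" by (rule osc_mono[OF sub])
    finally show "ereal \<bar>g x - cval {y. qf \<delta> y = qf \<delta> x} g\<bar> \<le> osc g (ball x \<epsilon>)" .
  qed
  then have "AE x in lborel. ereal \<bar>g x - cval {y. qf \<delta> y = qf \<delta> x} g\<bar> \<le> osc g (ball x \<epsilon>)"
    by (simp add: AE_completion_iff)
  then show ?thesis
    by (rule eventually_mono) (metis e2ennreal_ereal e2ennreal_mono)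
qed

lemma E2:
  fixes g :: "'a::euclidean_space \<Rightarrow> real" and \<psi>' :: "'a \<Rightarrow> real" and \<delta> \<epsilon> m c :: real
  assumes [measurable]: "\<psi>' \<in> borel_measurable borel" "g \<in> borel_measurable borel" "K \<in> sets borel"
  assumes "0 < \<delta>" "DIM('a) * \<delta> \<le> \<epsilon>" "0 < m" "\<forall>x\<in>K. m \<le> \<psi>' x"
    and bv: "(\<integral>\<^sup>+x. e2ennreal (osc g (ball x \<epsilon>)) \<partial>density lborel (\<lambda>x. ennreal (\<psi>' x))) \<le> ennreal c"
  shows "(\<integral>\<^sup>+x. indicator K x * ennreal \<bar>g x - cval {y. qf \<delta> y = qf \<delta> x} g\<bar> \<partial>lborel) \<le> ennreal (c / m)"
proof -
  let ?A = "\<lambda>x. cval {y. qf \<delta> y = qf \<delta> x} g"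
  have [measurable]: "?A \<in> borel_measurable borel"
    by (rule A_measurable[of "\<lambda>p. cval {y. qf \<delta> y = p} g"])
  let ?h = "\<lambda>x. indicator K x * ennreal \<bar>g x - ?A x\<bar>"
  have "ennreal m * (\<integral>\<^sup>+x. ?h x \<partial>lborel) = (\<integral>\<^sup>+x. ennreal m * ?h x \<partial>lborel)"
    by (rule nn_integral_cmult[symmetric]) measurable
  also have "\<dots> \<le> (\<integral>\<^sup>+x. ennreal (\<psi>' x) * ?h x \<partial>lborel)"
  proof (rule nn_integral_mono)
    fix x show "ennreal m * ?h x \<le> ennreal (\<psi>' x) * ?h x"
      using assms(7) by (cases "x \<in> K") (auto intro!: mult_right_mono ennreal_leI)
  qed
  also have "\<dots> = (\<integral>\<^sup>+x. ?h x \<partial>density lborel (\<lambda>x. ennreal (\<psi>' x)))"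
    by (rule nn_integral_density[symmetric]) measurable
  also have "\<dots> \<le> (\<integral>\<^sup>+x. e2ennreal (osc g (ball x \<epsilon>)) \<partial>density lborel (\<lambda>x. ennreal (\<psi>' x)))"
  proof (rule nn_integral_mono_AE)
    have "AE x in lborel. ?h x \<le> e2ennreal (osc g (ball x \<epsilon>))"
      using E1[OF assms(4,5), of g]
    proof (rule eventually_mono)
      fix x assume "ennreal \<bar>g x - ?A x\<bar> \<le> e2ennreal (osc g (ball x \<epsilon>))"
      then show "?h x \<le> e2ennreal (osc g (ball x \<epsilon>))"
        by (cases "x \<in> K") auto
    qed
    then show "AE x in density lborel (\<lambda>x. ennreal (\<psi>' x)). ?h x \<le> e2ennreal (osc g (ball x \<epsilon>))"
      by (subst AE_density) (auto elim: eventually_mono)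
  qed
  also have "\<dots> \<le> ennreal c" by (rule bv)
  finally show ?thesis by (rule ennreal_mult_le_div[OF assms(6)])
qed

lemma E3:
  fixes g :: "'a::euclidean_space \<Rightarrow> real"
  assumes [measurable]: "g \<in> borel_measurable borel" "K \<in> sets borel"
  assumes "0 < \<delta>" "p \<in> Lat" "{y. qf \<delta> y = p} \<subseteq> K"
    and l1: "(\<integral>\<^sup>+x. ennreal \<bar>g x\<bar> \<partial>lborel) \<le> ennreal c1"
    and e2: "(\<integral>\<^sup>+x. indicator K x * ennreal \<bar>g x - cval {y. qf \<delta> y = qf \<delta> x} g\<bar> \<partial>lborel) \<le> ennreal c2"
    and "0 \<le> c1" "0 \<le> c2"
  shows "\<bar>cval {y. qf \<delta> y = p} g\<bar> \<le> (c1 + c2) / \<delta> ^ DIM('a)"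
proof -
  let ?Q = "{y. qf \<delta> y = p}"
  let ?F = "cval ?Q g"
  let ?A = "\<lambda>x. cval {y. qf \<delta> y = qf \<delta> x} g"
  have [measurable]: "?A \<in> borel_measurable borel"
    by (rule A_measurable[of "\<lambda>p. cval {y. qf \<delta> y = p} g"])
  have "ennreal (\<bar>?F\<bar> * \<delta> ^ DIM('a)) = ennreal \<bar>?F\<bar> * emeasure lborel (box (\<delta> *\<^sub>R p) (\<delta> *\<^sub>R p + \<delta> *\<^sub>R One))"
    using assms(3) by (simp add: emeasure_cell_box ennreal_mult)
  also have "\<dots> \<le> ennreal \<bar>?F\<bar> * emeasure lborel ?Q"
    by (intro mult_left_mono emeasure_mono box_sub_cell assms(3,4)) auto
  also have "\<dots> = (\<integral>\<^sup>+x. ennreal \<bar>?F\<bar> * indicator ?Q x \<partial>lborel)"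
    by (rule nn_integral_cmult_indicator[symmetric]) simp
  also have "\<dots> \<le> (\<integral>\<^sup>+x. ennreal \<bar>g x\<bar> + indicator K x * ennreal \<bar>g x - ?A x\<bar> \<partial>lborel)"
  proof (rule nn_integral_mono)
    fix x show "ennreal \<bar>?F\<bar> * indicator ?Q x \<le> ennreal \<bar>g x\<bar> + indicator K x * ennreal \<bar>g x - ?A x\<bar>"
    proof (cases "x \<in> ?Q")
      case True
      then have "x \<in> K" "?A x = ?F" using assms(5) by auto
      moreover have "\<bar>?F\<bar> \<le> \<bar>g x\<bar> + \<bar>g x - ?F\<bar>" by simp
      ultimately show ?thesis using True by (simp add: ennreal_plus[symmetric] del: ennreal_plus)
    qed simp
  qed
  also have "\<dots> = (\<integral>\<^sup>+x. ennreal \<bar>g x\<bar> \<partial>lborel) + (\<integral>\<^sup>+x. indicator K x * ennreal \<bar>g x - ?A x\<bar> \<partial>lborel)"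
    by (rule nn_integral_add) measurable
  also have "\<dots> \<le> ennreal c1 + ennreal c2" by (intro add_mono l1 e2)
  also have "\<dots> = ennreal (c1 + c2)" using assms by (simp add: ennreal_plus[symmetric] del: ennreal_plus)
  finally have "ennreal (\<bar>?F\<bar> * \<delta> ^ DIM('a)) \<le> ennreal (c1 + c2)" .
  then have "\<bar>?F\<bar> * \<delta> ^ DIM('a) \<le> c1 + c2"
    using assms(8,9) by (subst (asm) ennreal_le_iff) auto
  then show ?thesis using assms(3) by (simp add: pos_le_divide_eq)
qed


lemma L1_complete:
  fixes f :: "nat \<Rightarrow> 'a \<Rightarrow> real"
  assumes [measurable]: "\<And>n. f n \<in> borel_measurable M"
    and cau: "\<And>\<eta>. \<eta> > 0 \<Longrightarrow> \<exists>N. \<forall>n\<ge>N. \<forall>m\<ge>N. (\<integral>\<^sup>+x. ennreal \<bar>f n x - f m x\<bar> \<partial>M) < ennreal \<eta>"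
  shows "\<exists>r h. strict_mono r \<and> h \<in> borel_measurable M \<and>
           (\<lambda>k. \<integral>\<^sup>+x. ennreal \<bar>f (r k) x - h x\<bar> \<partial>M) \<longlonglongrightarrow> 0"
proof -
  have "\<forall>k. \<exists>N. \<forall>n\<ge>N. \<forall>m\<ge>N. (\<integral>\<^sup>+x. ennreal \<bar>f n x - f m x\<bar> \<partial>M) < ennreal ((1/2)^k)"
    using cau by simp
  then obtain N where N: "\<And>k n m. n \<ge> N k \<Longrightarrow> m \<ge> N k \<Longrightarrow> (\<integral>\<^sup>+x. ennreal \<bar>f n x - f m x\<bar> \<partial>M) < ennreal ((1/2)^k)"
    by metis
  define r where "r k = (\<Sum>i\<le>k. N i) + k" for k
  have r_suc: "r (Suc k) = r k + N (Suc k) + 1" for k unfolding r_def by simp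
  have sm: "strict_mono r" by (rule strict_monoI_Suc) (simp add: r_suc)
  have rN: "N k \<le> r k" for k unfolding r_def
    by (rule order_trans[OF _ le_add1], rule member_le_sum) auto
  have rk: "(\<integral>\<^sup>+x. ennreal \<bar>f (r k) x - f (r m) x\<bar> \<partial>M) < ennreal ((1/2)^k)" if "k \<le> m" for k m
  proof -
    have "r k \<le> r m" using sm that by (simp add: strict_mono_less_eq)
    then show ?thesis using rN[of k] by (intro N) auto
  qed
  define d where "d j x = ennreal \<bar>f (r (Suc j)) x - f (r j) x\<bar>" for j x
  have [measurable]: "d j \<in> borel_measurable M" for j unfolding d_def by measurable
  have dj: "(\<integral>\<^sup>+x. d j x \<partial>M) < ennreal ((1/2)^j)" for j
  proof -
    have "(\<lambda>x. d j x) = (\<lambda>x. ennreal \<bar>f (r j) x - f (r (Suc j)) x\<bar>)"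
      unfolding d_def by (simp add: abs_minus_commute)
    then show ?thesis using rk[of j "Suc j"] by simp
  qed
  have "(\<integral>\<^sup>+x. (\<Sum>j. d j x) \<partial>M) = (\<Sum>j. \<integral>\<^sup>+x. d j x \<partial>M)"
    by (rule nn_integral_suminf) measurable
  also have "\<dots> \<le> (\<Sum>j. ennreal ((1/2)^j))"
    by (intro suminf_le summableI less_imp_le dj)
  also have "\<dots> = ennreal (\<Sum>j. (1/2)^j)"
    by (rule suminf_ennreal2) auto
  finally have "(\<integral>\<^sup>+x. (\<Sum>j. d j x) \<partial>M) \<noteq> \<infinity>" by (auto simp: top_unique)
  then have "AE x in M. (\<Sum>j. d j x) \<noteq> \<infinity>"
    by (intro nn_integral_PInf_AE) measurable
  then have conv: "AE x in M. convergent (\<lambda>k. f (r k) x)"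
  proof (rule eventually_mono)
    fix x assume "(\<Sum>j. d j x) \<noteq> \<infinity>"
    then have "summable (\<lambda>j. \<bar>f (r (Suc j)) x - f (r j) x\<bar>)"
      unfolding d_def by (intro summable_suminf_not_top) auto
    then have "summable (\<lambda>j. f (r (Suc j)) x - f (r j) x)" by (rule summable_rabs_cancel)
    then have "(\<lambda>k. \<Sum>j<k. f (r (Suc j)) x - f (r j) x) \<longlonglongrightarrow> (\<Sum>j. f (r (Suc j)) x - f (r j) x)"
      by (rule summable_LIMSEQ)
    then have "(\<lambda>k. f (r 0) x + (\<Sum>j<k. f (r (Suc j)) x - f (r j) x)) \<longlonglongrightarrow> f (r 0) x + (\<Sum>j. f (r (Suc j)) x - f (r j) x)"
      by (intro tendsto_intros)
    moreover have "(\<lambda>k. f (r 0) x + (\<Sum>j<k. f (r (Suc j)) x - f (r j) x)) = (\<lambda>k. f (r k) x)"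
      by (simp add: sum_lessThan_telescope[where f="\<lambda>j. f (r j) x"])
    ultimately show "convergent (\<lambda>k. f (r k) x)" unfolding convergent_def by auto
  qed
  define h where "h x = lim (\<lambda>k. f (r k) x)" for x
  have hm: "h \<in> borel_measurable M" unfolding h_def by measurable
  have lim: "AE x in M. (\<lambda>k. f (r k) x) \<longlonglongrightarrow> h x"
    using conv by (rule eventually_mono) (simp add: h_def convergent_LIMSEQ_iff)
  have bnd: "(\<integral>\<^sup>+x. ennreal \<bar>f (r k) x - h x\<bar> \<partial>M) \<le> ennreal ((1/2)^k)" for k
  proof -
    have "(\<integral>\<^sup>+x. ennreal \<bar>f (r k) x - h x\<bar> \<partial>M) = (\<integral>\<^sup>+x. liminf (\<lambda>m. ennreal \<bar>f (r k) x - f (r m) x\<bar>) \<partial>M)"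
    proof (rule nn_integral_cong_AE)
      show "AE x in M. ennreal \<bar>f (r k) x - h x\<bar> = liminf (\<lambda>m. ennreal \<bar>f (r k) x - f (r m) x\<bar>)"
        using lim
      proof (rule eventually_mono)
        fix x assume "(\<lambda>k. f (r k) x) \<longlonglongrightarrow> h x"
        then have "(\<lambda>m. ennreal \<bar>f (r k) x - f (r m) x\<bar>) \<longlonglongrightarrow> ennreal \<bar>f (r k) x - h x\<bar>"
          by (intro tendsto_intros)
        then show "ennreal \<bar>f (r k) x - h x\<bar> = liminf (\<lambda>m. ennreal \<bar>f (r k) x - f (r m) x\<bar>)"
          by (rule lim_imp_Liminf[symmetric, rotated]) simp
      qed
    qed
    also have "\<dots> \<le> liminf (\<lambda>m. \<integral>\<^sup>+x. ennreal \<bar>f (r k) x - f (r m) x\<bar> \<partial>M)"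
      by (rule nn_integral_liminf) measurable
    also have "\<dots> \<le> limsup (\<lambda>m. \<integral>\<^sup>+x. ennreal \<bar>f (r k) x - f (r m) x\<bar> \<partial>M)"
      by (rule Liminf_le_Limsup) simp
    also have "\<dots> \<le> ennreal ((1/2)^k)"
    proof (rule Limsup_bounded)
      show "\<forall>\<^sub>F m in sequentially. (\<integral>\<^sup>+x. ennreal \<bar>f (r k) x - f (r m) x\<bar> \<partial>M) \<le> ennreal ((1/2)^k)"
        unfolding eventually_sequentially by (rule exI[of _ k]) (auto intro!: less_imp_le[OF rk])
    qed
    finally show ?thesis .
  qed
  have z: "(\<lambda>k. ennreal ((1/2)^k)) \<longlonglongrightarrow> 0"
    using tendsto_ennrealI[OF LIMSEQ_realpow_zero[of "1/2::real"]] by simp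
  have "(\<lambda>k. \<integral>\<^sup>+x. ennreal \<bar>f (r k) x - h x\<bar> \<partial>M) \<longlonglongrightarrow> 0"
  proof (rule tendsto_sandwich[where f="\<lambda>_. 0" and h="\<lambda>k. ennreal ((1/2)^k)"])
    show "\<forall>\<^sub>F n in sequentially. (0::ennreal) \<le> (\<integral>\<^sup>+x. ennreal \<bar>f (r n) x - h x\<bar> \<partial>M)" by simp
    show "\<forall>\<^sub>F n in sequentially. (\<integral>\<^sup>+x. ennreal \<bar>f (r n) x - h x\<bar> \<partial>M) \<le> ennreal ((1/2)^n)"
      by (intro always_eventually allI bnd)
    show "((\<lambda>_. 0::ennreal) \<longlongrightarrow> 0) sequentially" by simp
    show "(\<lambda>k. ennreal ((1/2)^k)) \<longlonglongrightarrow> 0" by (rule z)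
  qed
  then show ?thesis using sm hm by blast
qed


lemma rho_ge1: "0 \<le> \<alpha> \<Longrightarrow> 1 \<le> rho \<alpha> x"
  unfolding rho_def by (intro ge_one_powr_ge_zero) auto

lemma rho_large:
  fixes \<Lambda> \<alpha> :: real
  assumes "\<alpha> > 0"
  shows "\<exists>R\<ge>0. \<forall>x::'a::euclidean_space. R < norm x \<longrightarrow> \<Lambda> \<le> rho \<alpha> x"
proof -
  define T where "T = max \<Lambda> 1"
  define R where "R = sqrt (T powr (2/\<alpha>))"
  have T: "1 \<le> T" "\<Lambda> \<le> T" unfolding T_def by auto
  have R2: "R\<^sup>2 = T powr (2/\<alpha>)" unfolding R_def by simp
  have "\<Lambda> \<le> rho \<alpha> x" if "R < norm x" for x :: 'a
  proof -
    have "R\<^sup>2 \<le> (norm x)\<^sup>2" using that by (intro power_mono) (auto simp: R_def)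
    then have "T powr (2/\<alpha>) \<le> 1 + (norm x)\<^sup>2" using R2 by simp
    then have "(T powr (2/\<alpha>)) powr (\<alpha>/2) \<le> (1 + (norm x)\<^sup>2) powr (\<alpha>/2)"
      using assms by (intro powr_mono2) auto
    moreover have "(T powr (2/\<alpha>)) powr (\<alpha>/2) = T"
      using assms T by (simp add: powr_powr)
    ultimately show ?thesis using T unfolding rho_def by simp
  qed
  moreover have "R \<ge> 0" unfolding R_def by simp
  ultimately show ?thesis by blast
qed

lemma tail:
  fixes g :: "'a::euclidean_space \<Rightarrow> real"
  assumes [measurable]: "g \<in> borel_measurable borel"
    and "\<forall>x::'a. R < norm x \<longrightarrow> \<Lambda> \<le> rho \<alpha> x" "0 < \<Lambda>"
    and L1: "(\<integral>\<^sup>+x. ennreal (rho \<alpha> x * \<bar>g x\<bar>) \<partial>lborel) \<le> ennreal C"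
  shows "(\<integral>\<^sup>+x. indicator {x. R < norm x} x * ennreal \<bar>g x\<bar> \<partial>lborel) \<le> ennreal (C / \<Lambda>)"
proof (rule ennreal_mult_le_div[OF assms(3)])
  have "ennreal \<Lambda> * (\<integral>\<^sup>+x. indicator {x. R < norm x} x * ennreal \<bar>g x\<bar> \<partial>lborel)
      = (\<integral>\<^sup>+x. ennreal \<Lambda> * (indicator {x. R < norm x} x * ennreal \<bar>g x\<bar>) \<partial>lborel)"
    by (rule nn_integral_cmult[symmetric]) measurable
  also have "\<dots> \<le> (\<integral>\<^sup>+x. ennreal (rho \<alpha> x * \<bar>g x\<bar>) \<partial>lborel)"
  proof (rule nn_integral_mono)
    fix x
    show "ennreal \<Lambda> * (indicator {x. R < norm x} x * ennreal \<bar>g x\<bar>) \<le> ennreal (rho \<alpha> x * \<bar>g x\<bar>)"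
    proof (cases "R < norm x")
      case True
      then have "\<Lambda> * \<bar>g x\<bar> \<le> rho \<alpha> x * \<bar>g x\<bar>" using assms(2) by (intro mult_right_mono) auto
      then show ?thesis using True assms(3) by (simp add: ennreal_mult[symmetric] ennreal_leI)
    qed simp
  qed
  also have "\<dots> \<le> ennreal C" by (rule L1)
  finally show "ennreal \<Lambda> * (\<integral>\<^sup>+x. indicator {x. R < norm x} x * ennreal \<bar>g x\<bar> \<partial>lborel) \<le> ennreal C" .
qed

lemma core:
  fixes \<psi>' :: "'a::euclidean_space \<Rightarrow> real" and g :: "nat \<Rightarrow> 'a \<Rightarrow> real" and C \<alpha> :: real
  assumes "\<alpha> > 0" "C > 0"
    and psim[measurable]: "\<psi>' \<in> borel_measurable borel"
    and psimin: "\<And>R. \<exists>m>0. \<forall>x\<in>cball 0 R. m \<le> \<psi>' x"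
    and gm[measurable]: "\<And>n. g n \<in> borel_measurable borel"
    and L1: "\<And>n. (\<integral>\<^sup>+x. ennreal (rho \<alpha> x * \<bar>g n x\<bar>) \<partial>lborel) \<le> ennreal C"
    and BV: "\<And>n \<epsilon>. 0 < \<epsilon> \<Longrightarrow> \<epsilon> \<le> 1 \<Longrightarrow>
      (\<integral>\<^sup>+x. e2ennreal (osc (g n) (ball x \<epsilon>)) \<partial>density lborel (\<lambda>x. ennreal (\<psi>' x))) \<le> ennreal (C * \<epsilon>)"
  shows "\<exists>s::nat\<Rightarrow>nat. strict_mono s \<and> (\<forall>\<eta>>0. \<exists>N. \<forall>n\<ge>N. \<forall>m\<ge>N.
            (\<integral>\<^sup>+x. ennreal \<bar>g (s n) x - g (s m) x\<bar> \<partial>lborel) < ennreal \<eta>)"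
proof -
  obtain mf where mf: "\<And>R. 0 < mf R" "\<And>R. \<forall>x\<in>cball 0 R. mf R \<le> \<psi>' x"
    using psimin by metis
  define D where "D = real DIM('a)"
  have D: "1 \<le> D" unfolding D_def by (simp add: DIM_positive Suc_leI)
  define eps where "eps k = 1 / (real k + 1)" for k :: nat
  define \<delta> where "\<delta> k = eps k / D" for k
  have eps_pos: "0 < eps k" and eps_le: "eps k \<le> 1" for k unfolding eps_def by auto
  have \<delta>_pos: "0 < \<delta> k" for k unfolding \<delta>_def using eps_pos D by simp
  have D\<delta>: "DIM('a) * \<delta> k \<le> eps k" for k unfolding \<delta>_def D_def using D D_def by simp
  define F where "F n k p = cval {y. qf (\<delta> k) y = p} (g n)" for n k and p :: 'a
  define A where "A n k x = F n k (qf (\<delta> k) x)" for n k x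
  have Am[measurable]: "A n k \<in> borel_measurable borel" for n k
    unfolding A_def by (rule A_measurable)
  have L1g: "(\<integral>\<^sup>+x. ennreal \<bar>g n x\<bar> \<partial>lborel) \<le> ennreal C" for n
  proof -
    have "(\<integral>\<^sup>+x. ennreal \<bar>g n x\<bar> \<partial>lborel) \<le> (\<integral>\<^sup>+x. ennreal (rho \<alpha> x * \<bar>g n x\<bar>) \<partial>lborel)"
    proof (rule nn_integral_mono)
      fix x
      have "1 * \<bar>g n x\<bar> \<le> rho \<alpha> x * \<bar>g n x\<bar>" using rho_ge1[of \<alpha> x] assms(1) by (intro mult_right_mono) auto
      then show "ennreal \<bar>g n x\<bar> \<le> ennreal (rho \<alpha> x * \<bar>g n x\<bar>)" by (intro ennreal_leI) simp
    qed
    then show ?thesis using L1[of n] by order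
  qed
  have E2': "(\<integral>\<^sup>+x. indicator (cball 0 R) x * ennreal \<bar>g n x - A n k x\<bar> \<partial>lborel) \<le> ennreal (C * eps k / mf R)" for n k R
    unfolding A_def F_def
    by (rule E2[OF psim gm _ \<delta>_pos D\<delta> mf(1) mf(2) BV[OF eps_pos eps_le]]) simp
  have Fb: "\<bar>F n k p\<bar> \<le> (C + C * eps k / mf R) / \<delta> k ^ DIM('a)"
    if "p \<in> Lat" "{y. qf (\<delta> k) y = p} \<subseteq> cball 0 R" for n k p R
    unfolding F_def
  proof (rule E3[OF gm _ \<delta>_pos that L1g E2'[unfolded A_def F_def]])
    show "0 \<le> C * eps k / mf R"
      using assms(2) eps_pos[of k] mf(1)[of R] by (intro divide_nonneg_pos mult_nonneg_nonneg) auto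
  qed (use assms(2) in auto)
  have cellsub: "{y. qf (\<delta> k) y = qf (\<delta> k) x} \<subseteq> cball 0 (R + 1)" if "norm x \<le> R" for k and x :: 'a and R
  proof
    fix y assume "y \<in> {y. qf (\<delta> k) y = qf (\<delta> k) x}"
    then have "dist x y < DIM('a) * \<delta> k" using qf_dist[of "\<delta> k" x y] \<delta>_pos[of k] by simp
    then have "dist x y < 1" using D\<delta>[of k] eps_le[of k] by simp
    then have "norm y \<le> norm x + 1" using norm_triangle_ineq2[of y x] by (simp add: dist_norm norm_minus_commute)
    then show "y \<in> cball 0 (R + 1)" using that by simp
  qed
  have Fbnd: "\<exists>B. \<forall>n. \<bar>F n k p\<bar> \<le> B" if "p \<in> Lat" for k p
  proof (cases "\<exists>x. qf (\<delta> k) x = p")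
    case True
    then obtain x where x: "qf (\<delta> k) x = p" by blast
    show ?thesis using Fb[OF that cellsub[of x "norm x" k, unfolded x]] by auto
  next
    case False
    then have sub0: "{y. qf (\<delta> k) y = p} \<subseteq> cball 0 0" by auto
    show ?thesis using Fb[OF that sub0] by blast
  qed
  define I where "I = (UNIV :: nat set) \<times> (Lat :: 'a set)"
  have I: "countable I" "I \<noteq> {}" unfolding I_def using countable_Lat qf_Lat by auto
  define e where "e = from_nat_into I"
  have e_range: "range e = I" unfolding e_def using I by simp
  define c where "c i n = F n (fst (e i)) (snd (e i))" for i n
  have "\<forall>i. \<exists>B. \<forall>n. \<bar>c i n\<bar> \<le> B"
  proof
    fix i
    have "e i \<in> I" using e_range by auto
    then show "\<exists>B. \<forall>n. \<bar>c i n\<bar> \<le> B" unfolding c_def I_def by (intro Fbnd) auto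
  qed
  then obtain B where "\<And>i n. \<bar>c i n\<bar> \<le> B i" by metis
  then obtain s where s: "strict_mono s" "\<And>i. convergent (\<lambda>n. c i (s n))"
    using diag_conv by metis
  have convA: "convergent (\<lambda>n. A (s n) k x)" for k x
  proof -
    have "(k, qf (\<delta> k) x) \<in> range e" unfolding e_range I_def by (simp add: qf_Lat)
    then obtain i where "e i = (k, qf (\<delta> k) x)" by (metis imageE)
    then show ?thesis using s(2)[of i] unfolding c_def A_def by simp
  qed
  have cauchy: "\<exists>N. \<forall>n\<ge>N. \<forall>m\<ge>N. (\<integral>\<^sup>+x. ennreal \<bar>g (s n) x - g (s m) x\<bar> \<partial>lborel) < ennreal \<eta>"
    if "\<eta> > 0" for \<eta>
  proof -
    define \<Lambda> where "\<Lambda> = 7 * C / \<eta>"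
    have \<Lambda>: "0 < \<Lambda>" unfolding \<Lambda>_def using assms(2) that by simp
    obtain R where R: "R \<ge> 0" "\<forall>x::'a. R < norm x \<longrightarrow> \<Lambda> \<le> rho \<alpha> x"
      using rho_large[OF assms(1)] by blast
    have tl: "(\<integral>\<^sup>+x. indicator {x. R < norm x} x * ennreal \<bar>g n x\<bar> \<partial>lborel) \<le> ennreal (\<eta> / 7)" for n
      using tail[OF gm R(2) \<Lambda> L1[of n]] unfolding \<Lambda>_def using assms(2) that by simp
    define m where "m = mf R"
    have m: "0 < m" unfolding m_def by (rule mf(1))
    obtain k where k: "7 * C / (\<eta> * m) < real k + 1"
      using reals_Archimedean2[of "7 * C / (\<eta> * m)"] by (metis less_add_one less_trans)
    have "7 * C < (real k + 1) * (\<eta> * m)" using k m that by (simp add: divide_less_eq)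
    then have h7: "C \<le> (\<eta> / 7) * ((real k + 1) * m)" by (simp add: algebra_simps)
    have pos: "0 < (real k + 1) * m" using m by simp
    have "C * eps k / m = C / ((real k + 1) * m)" unfolding eps_def by simp
    also have "\<dots> \<le> \<eta> / 7" using h7 pos by (simp add: pos_divide_le_eq)
    finally have keps: "C * eps k / m \<le> \<eta> / 7" .
    have e2k: "(\<integral>\<^sup>+x. indicator (cball 0 R) x * ennreal \<bar>g n x - A n k x\<bar> \<partial>lborel) \<le> ennreal (\<eta> / 7)" for n
      using E2'[where n=n and R=R and k=k] keps unfolding m_def by (meson order_trans ennreal_leI)
    define Bk where "Bk = (C + C * eps k / mf (R + 1)) / \<delta> k ^ DIM('a)"
    define K where "K = cball (0::'a) R"
    have K[measurable]: "K \<in> sets borel" unfolding K_def by simp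
    define u where "u n x = indicator K x * A (s n) k x" for n x
    define u' where "u' x = indicator K x * lim (\<lambda>n. A (s n) k x)" for x
    define w where "w x = indicator K x * Bk" for x
    have [measurable]: "u n \<in> borel_measurable borel" for n unfolding u_def by measurable
    have [measurable]: "u' \<in> borel_measurable borel" unfolding u'_def by measurable
    have [measurable]: "w \<in> borel_measurable borel" unfolding w_def by measurable
    have dct: "(\<lambda>i. (\<integral>\<^sup>+x. norm (u' x - u i x) \<partial>lborel)) \<longlonglongrightarrow> 0"
    proof (rule nn_integral_dominated_convergence_norm)
      show "AE x in lborel. norm (u j x) \<le> w x" for j
      proof (rule AE_I2)
        fix x show "norm (u j x) \<le> w x"
        proof (cases "x \<in> K")
          case True
          then have "norm x \<le> R" unfolding K_def by simp
          from Fb[OF qf_Lat cellsub[OF this]] True show ?thesis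
            unfolding u_def w_def A_def Bk_def by simp
        qed (simp add: u_def w_def)
      qed
      have "(\<integral>\<^sup>+x. w x \<partial>lborel) = (\<integral>\<^sup>+x. ennreal Bk * indicator K x \<partial>lborel)"
        unfolding w_def by (intro nn_integral_cong) (simp add: indicator_def)
      also have "\<dots> = ennreal Bk * emeasure lborel K" by (rule nn_integral_cmult_indicator) simp
      also have "\<dots> < \<infinity>" unfolding K_def using emeasure_lborel_cball_finite[of "0::'a" R]
        by (simp add: ennreal_mult_less_top less_top)
      finally show "(\<integral>\<^sup>+x. w x \<partial>lborel) < \<infinity>" .
      show "AE x in lborel. (\<lambda>i. u i x) \<longlonglongrightarrow> u' x"
      proof (rule AE_I2)
        fix x show "(\<lambda>i. u i x) \<longlonglongrightarrow> u' x"
          unfolding u_def u'_def using convA[of k x] by (intro tendsto_intros) (simp add: convergent_LIMSEQ_iff)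
      qed
    qed measurable
    have "0 < ennreal (\<eta> / 7)" using that by simp
    from order_tendstoD(2)[OF dct this] obtain N where
      N: "\<And>n. n \<ge> N \<Longrightarrow> (\<integral>\<^sup>+x. norm (u' x - u n x) \<partial>lborel) < ennreal (\<eta> / 7)"
      unfolding eventually_sequentially by blast
    have "\<forall>n\<ge>N. \<forall>m\<ge>N. (\<integral>\<^sup>+x. ennreal \<bar>g (s n) x - g (s m) x\<bar> \<partial>lborel) < ennreal \<eta>"
    proof (intro allI impI)
      fix n m assume nm: "n \<ge> N" "m \<ge> N"
      let ?T1 = "\<lambda>x. indicator K x * ennreal \<bar>g (s n) x - A (s n) k x\<bar>"
      let ?T2 = "\<lambda>x. ennreal (norm (u' x - u n x))"
      let ?T3 = "\<lambda>x. ennreal (norm (u' x - u m x))"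
      let ?T4 = "\<lambda>x. indicator K x * ennreal \<bar>g (s m) x - A (s m) k x\<bar>"
      let ?T5 = "\<lambda>x. indicator {x. R < norm x} x * ennreal \<bar>g (s n) x\<bar>"
      let ?T6 = "\<lambda>x. indicator {x. R < norm x} x * ennreal \<bar>g (s m) x\<bar>"
      have pw: "ennreal \<bar>g (s n) x - g (s m) x\<bar> \<le> ?T1 x + ?T2 x + ?T3 x + ?T4 x + ?T5 x + ?T6 x" for x
      proof (cases "x \<in> K")
        case True
        let ?L = "lim (\<lambda>n. A (s n) k x)"
        have "\<bar>g (s n) x - g (s m) x\<bar> \<le> \<bar>g (s n) x - A (s n) k x\<bar> + \<bar>?L - A (s n) k x\<bar> + \<bar>?L - A (s m) k x\<bar> + \<bar>g (s m) x - A (s m) k x\<bar>"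
          by linarith
        then have "ennreal \<bar>g (s n) x - g (s m) x\<bar> \<le> ennreal \<bar>g (s n) x - A (s n) k x\<bar> + ennreal \<bar>?L - A (s n) k x\<bar> + ennreal \<bar>?L - A (s m) k x\<bar> + ennreal \<bar>g (s m) x - A (s m) k x\<bar>"
          by (simp add: ennreal_plus[symmetric] del: ennreal_plus ennreal_leI)
        moreover have "\<not> R < norm x" using True unfolding K_def by simp
        ultimately show ?thesis using True unfolding u_def u'_def by simp
      next
        case False
        then have "R < norm x" unfolding K_def by simp
        moreover have "\<bar>g (s n) x - g (s m) x\<bar> \<le> \<bar>g (s n) x\<bar> + \<bar>g (s m) x\<bar>" by linarith
        then have "ennreal \<bar>g (s n) x - g (s m) x\<bar> \<le> ennreal \<bar>g (s n) x\<bar> + ennreal \<bar>g (s m) x\<bar>"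
          by (simp add: ennreal_plus[symmetric] del: ennreal_plus ennreal_leI)
        ultimately show ?thesis using False
          by (simp add: add.assoc) (metis (no_types, lifting) add.assoc add_increasing zero_le)
      qed
      have "(\<integral>\<^sup>+x. ennreal \<bar>g (s n) x - g (s m) x\<bar> \<partial>lborel) \<le> (\<integral>\<^sup>+x. ?T1 x + ?T2 x + ?T3 x + ?T4 x + ?T5 x + ?T6 x \<partial>lborel)"
        by (rule nn_integral_mono) (rule pw)
      also have "\<dots> = (\<integral>\<^sup>+x. ?T1 x \<partial>lborel) + (\<integral>\<^sup>+x. ?T2 x \<partial>lborel) + (\<integral>\<^sup>+x. ?T3 x \<partial>lborel)
          + (\<integral>\<^sup>+x. ?T4 x \<partial>lborel) + (\<integral>\<^sup>+x. ?T5 x \<partial>lborel) + (\<integral>\<^sup>+x. ?T6 x \<partial>lborel)"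
        by (simp add: nn_integral_add)
      also have "\<dots> \<le> ennreal (\<eta>/7) + ennreal (\<eta>/7) + ennreal (\<eta>/7) + ennreal (\<eta>/7) + ennreal (\<eta>/7) + ennreal (\<eta>/7)"
        using e2k[of "s n"] e2k[of "s m"] N[OF nm(1)] N[OF nm(2)] tl[of "s n"] tl[of "s m"]
        unfolding K_def
        by (intro add_mono) auto
      also have "\<dots> = ennreal (6 * (\<eta> / 7))"
        using that by (simp add: ennreal_plus[symmetric] del: ennreal_plus)
      also have "\<dots> < ennreal \<eta>" using that by (intro ennreal_lessI) auto
      finally show "(\<integral>\<^sup>+x. ennreal \<bar>g (s n) x - g (s m) x\<bar> \<partial>lborel) < ennreal \<eta>" .
    qed
    then show ?thesis by blast
  qed
  have "\<forall>\<eta>>0. \<exists>N. \<forall>n\<ge>N. \<forall>m\<ge>N. (\<integral>\<^sup>+x. ennreal \<bar>g (s n) x - g (s m) x\<bar> \<partial>lborel) < ennreal \<eta>"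
    using cauchy by blast
  then show ?thesis using s(1) by blast
qed


lemma div_le_imp:
  assumes "0 < e" "0 \<le> c" "X / ennreal e \<le> ennreal c"
  shows "X \<le> ennreal (c * e)"
proof -
  have "X = (X / ennreal e) * ennreal e"
    using assms(1) by (simp add: ennreal_divide_times divide_ennreal)
  also have "\<dots> \<le> ennreal c * ennreal e" by (intro mult_right_mono assms(3)) simp
  also have "\<dots> = ennreal (c * e)" using assms by (simp add: ennreal_mult)
  finally show ?thesis .
qed

theorem theorem16:
  fixes \<psi> :: "'a::euclidean_space measure"
    and \<psi>' :: "'a \<Rightarrow> real"
    and \<alpha> :: real
    and g :: "nat \<Rightarrow> 'a \<Rightarrow> real"
  assumes "\<alpha> > 0"
    and "prob_space \<psi>"
    and "\<psi> = density lborel (\<lambda>x. ennreal (\<psi>' x))"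
    and "continuous_on UNIV \<psi>'"
    and "bounded (range \<psi>')"
    and "\<And>x. \<psi>' x > 0"
    and "\<And>n. g n \<in> borel_measurable lebesgue"
    and "\<exists>C::real. \<forall>n. BVw_norm \<psi> \<alpha> (g n) \<le> ennreal C"
  shows "\<exists>r h. strict_mono r \<and> integrable lebesgue h \<and>
           (\<lambda>n. \<integral>\<^sup>+ x. ennreal \<bar>g (r n) x - h x\<bar> \<partial>lebesgue) \<longlonglongrightarrow> 0"
proof -
  obtain C0 where C0: "\<And>n. BVw_norm \<psi> \<alpha> (g n) \<le> ennreal C0" using assms(8) by blast
  define C where "C = max C0 1"
  have Cpos: "C > 0" unfolding C_def by simp
  have Cb: "BVw_norm \<psi> \<alpha> (g n) \<le> ennreal C" for n
    using C0[of n] unfolding C_def by (meson ennreal_leI max.cobounded1 order_trans)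
  have psim[measurable]: "\<psi>' \<in> borel_measurable borel"
    by (rule borel_measurable_continuous_onI[OF assms(4)])
  have "\<forall>n. \<exists>g'. g' \<in> borel_measurable lborel \<and> (AE x in lborel. g n x = g' x)"
    using completion_ex_borel_measurable_real[OF assms(7)] by blast
  then obtain gb where gb: "\<And>n. gb n \<in> borel_measurable lborel" "\<And>n. AE x in lborel. g n x = gb n x"
    by metis
  have gbm[measurable]: "gb n \<in> borel_measurable borel" for n using gb(1)[of n] by simp
  have gae: "AE x in lebesgue. g n x = gb n x" for n
    using gb(2)[of n] by (simp add: AE_completion_iff)
  have osc_eq: "osc (g n) S = osc (gb n) S" for n S by (rule osc_cong_AE[OF gae])
  have L1: "(\<integral>\<^sup>+x. ennreal (rho \<alpha> x * \<bar>gb n x\<bar>) \<partial>lborel) \<le> ennreal C" for n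
  proof -
    have "(\<integral>\<^sup>+x. ennreal (rho \<alpha> x * \<bar>gb n x\<bar>) \<partial>lborel) = (\<integral>\<^sup>+x. ennreal (rho \<alpha> x * \<bar>gb n x\<bar>) \<partial>lebesgue)"
      by (simp add: nn_integral_completion)
    also have "\<dots> = L1w_norm \<alpha> (g n)"
      unfolding L1w_norm_def using gae[of n] by (intro nn_integral_cong_AE) (auto elim: eventually_mono)
    also have "\<dots> \<le> BVw_norm \<psi> \<alpha> (g n)" unfolding BVw_norm_def by (rule add_increasing2) auto
    also have "\<dots> \<le> ennreal C" by (rule Cb)
    finally show ?thesis .
  qed
  have BV: "(\<integral>\<^sup>+x. e2ennreal (osc (gb n) (ball x \<epsilon>)) \<partial>density lborel (\<lambda>x. ennreal (\<psi>' x))) \<le> ennreal (C * \<epsilon>)"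
    if "0 < \<epsilon>" "\<epsilon> \<le> 1" for n \<epsilon>
  proof (rule div_le_imp[OF that(1)])
    show "0 \<le> C" using Cpos by simp
    have "(\<integral>\<^sup>+x. e2ennreal (osc (gb n) (ball x \<epsilon>)) \<partial>density lborel (\<lambda>x. ennreal (\<psi>' x))) / ennreal \<epsilon>
        \<le> (SUP \<epsilon>\<in>{0<..1::real}. (\<integral>\<^sup>+ x. e2ennreal (osc (g n) (ball x \<epsilon>)) \<partial>\<psi>) / ennreal \<epsilon>)"
      using that unfolding osc_eq assms(3) by (intro SUP_upper2[of \<epsilon>]) auto
    also have "\<dots> \<le> BVw_norm \<psi> \<alpha> (g n)" unfolding BVw_norm_def by (rule add_increasing) auto
    also have "\<dots> \<le> ennreal C" by (rule Cb)
    finally show "(\<integral>\<^sup>+x. e2ennreal (osc (gb n) (ball x \<epsilon>)) \<partial>density lborel (\<lambda>x. ennreal (\<psi>' x))) / ennreal \<epsilon> \<le> ennreal C" .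
  qed
  have psimin: "\<exists>m>0. \<forall>x\<in>cball 0 R. m \<le> \<psi>' x" for R :: real
  proof (cases "cball (0::'a) R = {}")
    case True then show ?thesis by (intro exI[of _ 1]) simp
  next
    case False
    have "continuous_on (cball (0::'a) R) \<psi>'" using assms(4) by (rule continuous_on_subset) simp
    then obtain x0 where x0: "x0 \<in> cball (0::'a) R" "\<forall>y\<in>cball 0 R. \<psi>' x0 \<le> \<psi>' y"
      using continuous_attains_inf[OF compact_cball False] by blast
    show ?thesis by (rule exI[of _ "\<psi>' x0"]) (use x0 assms(6)[of x0] in simp)
  qed
  obtain s :: "nat \<Rightarrow> nat" where s: "strict_mono s"
    "\<And>\<eta>. \<eta> > 0 \<Longrightarrow> \<exists>N. \<forall>n\<ge>N. \<forall>m\<ge>N. (\<integral>\<^sup>+x. ennreal \<bar>gb (s n) x - gb (s m) x\<bar> \<partial>lborel) < ennreal \<eta>"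
  proof -
    have "\<exists>s::nat\<Rightarrow>nat. strict_mono s \<and> (\<forall>\<eta>>0. \<exists>N. \<forall>n\<ge>N. \<forall>m\<ge>N.
            (\<integral>\<^sup>+x. ennreal \<bar>gb (s n) x - gb (s m) x\<bar> \<partial>lborel) < ennreal \<eta>)"
      by (rule core[of \<alpha> C \<psi>' gb, OF assms(1) Cpos psim psimin gbm L1]) (simp add: BV)
    then show ?thesis using that by blast
  qed
  obtain r h where rh: "strict_mono r" "h \<in> borel_measurable lborel"
    "(\<lambda>k. \<integral>\<^sup>+x. ennreal \<bar>gb (s (r k)) x - h x\<bar> \<partial>lborel) \<longlonglongrightarrow> 0"
    using L1_complete[of "\<lambda>n. gb (s n)" lborel, OF gb(1) s(2)] by blast
  have hm[measurable]: "h \<in> borel_measurable borel" using rh(2) by simp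
  have conv: "(\<lambda>k. \<integral>\<^sup>+x. ennreal \<bar>g ((s \<circ> r) k) x - h x\<bar> \<partial>lebesgue) \<longlonglongrightarrow> 0"
  proof -
    have "(\<integral>\<^sup>+x. ennreal \<bar>g ((s \<circ> r) k) x - h x\<bar> \<partial>lebesgue) = (\<integral>\<^sup>+x. ennreal \<bar>gb (s (r k)) x - h x\<bar> \<partial>lborel)" for k
    proof -
      have "(\<integral>\<^sup>+x. ennreal \<bar>g ((s \<circ> r) k) x - h x\<bar> \<partial>lebesgue) = (\<integral>\<^sup>+x. ennreal \<bar>gb (s (r k)) x - h x\<bar> \<partial>lebesgue)"
        using gae[of "s (r k)"] by (intro nn_integral_cong_AE) (auto elim: eventually_mono)
      then show ?thesis by (simp add: nn_integral_completion)
    qed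
    then show ?thesis using rh(3) by simp
  qed
  have "integrable lborel h"
  proof (rule integrableI_bounded)
    show "h \<in> borel_measurable lborel" by (rule rh(2))
    have "0 < (1::ennreal)" by simp
    from order_tendstoD(2)[OF rh(3) this] obtain k where
      k: "(\<integral>\<^sup>+x. ennreal \<bar>gb (s (r k)) x - h x\<bar> \<partial>lborel) < 1"
      by (auto simp: eventually_sequentially)
    have "(\<integral>\<^sup>+x. ennreal (norm (h x)) \<partial>lborel) \<le> (\<integral>\<^sup>+x. ennreal \<bar>gb (s (r k)) x\<bar> + ennreal \<bar>gb (s (r k)) x - h x\<bar> \<partial>lborel)"
    proof (rule nn_integral_mono)
      fix x
      have "norm (h x) \<le> \<bar>gb (s (r k)) x\<bar> + \<bar>gb (s (r k)) x - h x\<bar>" by simp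
      then show "ennreal (norm (h x)) \<le> ennreal \<bar>gb (s (r k)) x\<bar> + ennreal \<bar>gb (s (r k)) x - h x\<bar>"
        by (simp add: ennreal_plus[symmetric] del: ennreal_plus ennreal_leI)
    qed
    also have "\<dots> = (\<integral>\<^sup>+x. ennreal \<bar>gb (s (r k)) x\<bar> \<partial>lborel) + (\<integral>\<^sup>+x. ennreal \<bar>gb (s (r k)) x - h x\<bar> \<partial>lborel)"
      by (rule nn_integral_add) measurable
    also have "\<dots> < \<infinity>"
    proof -
      have "(\<integral>\<^sup>+x. ennreal \<bar>gb (s (r k)) x\<bar> \<partial>lborel) \<le> (\<integral>\<^sup>+x. ennreal (rho \<alpha> x * \<bar>gb (s (r k)) x\<bar>) \<partial>lborel)"
      proof (rule nn_integral_mono)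
        fix x
        have "1 * \<bar>gb (s (r k)) x\<bar> \<le> rho \<alpha> x * \<bar>gb (s (r k)) x\<bar>"
          using rho_ge1[of \<alpha> x] assms(1) by (intro mult_right_mono) auto
        then show "ennreal \<bar>gb (s (r k)) x\<bar> \<le> ennreal (rho \<alpha> x * \<bar>gb (s (r k)) x\<bar>)" by (intro ennreal_leI) simp
      qed
      also have "\<dots> \<le> ennreal C" by (rule L1)
      finally have a: "(\<integral>\<^sup>+x. ennreal \<bar>gb (s (r k)) x\<bar> \<partial>lborel) < \<infinity>" by (simp add: le_less_trans)
      have b: "(\<integral>\<^sup>+x. ennreal \<bar>gb (s (r k)) x - h x\<bar> \<partial>lborel) < \<infinity>" using k by (rule less_trans) simp
      show ?thesis using a b by (simp add: ennreal_add_less_top)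
    qed
    finally show "(\<integral>\<^sup>+x. ennreal (norm (h x)) \<partial>lborel) < \<infinity>" .
  qed
  then have "integrable lebesgue h" using integrable_completion[OF rh(2)] by simp
  moreover have "strict_mono (s \<circ> r)" using s(1) rh(1) by (rule strict_mono_o)
  ultimately show ?thesis using conv by blast
qed

end
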